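(* Let $G$ be an influence graph that is a directed line on nodes $\{1,\dots,n\}$ with edges $(i+1,i)$ for $i=1,\dots,n-1$, and for each $i$ let $p_i$ be the probability that node $i$ reaches node $1$ in the live-edge graph. Then for every $(x_1,\dots,x_n)\in[0,1]^n$ and every $i\in\{1,\dots,n\}$, $$F_1(0,\dots,0,x_i,\dots,x_n)-F_1(0,\dots,0,x_{i+1},\dots,x_n)=x_ip_i\big(1-F_i(0,\dots,0,x_{i+1},\dots,x_n)\big),$$ where in each argument vector the first coordinates (up to position $i-1$, resp. $i$) are $0$ and coordinate $j$ equals $x_j$ for the remaining positions.
   Context: IC model: each edge $e$ has probability $p_e\in[0,1]$; a realization (live-edge graph) $\phi$ contains each edge independently with probability $p_e$, with distribution $\mathcal{P}$. $\Gamma(S,\phi)$ is the set of nodes reachable from $S$ in $\phi$. For a node $u$ and $S\subseteq\{1,\dots,n\}$, $\sigma_u(S)=\Pr_{\Phi\sim\mathcal{P}}[u\in\Gamma(S,\Phi)]$, and $F_u(y_1,\dots,y_n)=\sum_{S\subseteq[n]}\big(\prod_{j\in S}y_j\prod_{j\notin S}(1-y_j)\big)\sigma_u(S)$, i.e. the probability that $u$ is activated when each node $j$ is independently a seed with probability $y_j$. *)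

theory Defs
  imports Complex_Main
begin

text \<open>An influence graph is an edge set
  E of pairs (u,v) (edge from u to v) with edge probabilities pe. A realization
  (live-edge graph) is a subset phi of E; each edge is live independently.\<close>

definition realization_prob :: "(nat \<times> nat) set \<Rightarrow> (nat \<times> nat \<Rightarrow> real) \<Rightarrow> (nat \<times> nat) set \<Rightarrow> real" where
  "realization_prob E pe phi = (\<Prod>e\<in>phi. pe e) * (\<Prod>e\<in>E - phi. 1 - pe e)"

definition Gamma :: "nat set \<Rightarrow> (nat \<times> nat) set \<Rightarrow> nat set" where
  "Gamma S phi = {v. \<exists>s\<in>S. (s, v) \<in> phi\<^sup>*}"

definition sigma :: "(nat \<times> nat) set \<Rightarrow> (nat \<times> nat \<Rightarrow> real) \<Rightarrow> nat \<Rightarrow> nat set \<Rightarrow> real" where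
  "sigma E pe u S = (\<Sum>phi\<in>Pow E. realization_prob E pe phi * (if u \<in> Gamma S phi then 1 else 0))"

definition F :: "(nat \<times> nat) set \<Rightarrow> (nat \<times> nat \<Rightarrow> real) \<Rightarrow> nat \<Rightarrow> nat \<Rightarrow> (nat \<Rightarrow> real) \<Rightarrow> real" where
  "F E pe n u y = (\<Sum>S\<in>Pow {1..n}.
      (\<Prod>j\<in>S. y j) * (\<Prod>j\<in>{1..n} - S. 1 - y j) * sigma E pe u S)"

definition line_edges :: "nat \<Rightarrow> (nat \<times> nat) set" where
  "line_edges n = {(Suc i, i) | i. 1 \<le> i \<and> i < n}"

end

theory Submission
  imports Defs
begin

definition PS :: "'a set \<Rightarrow> ('a \<Rightarrow> real) \<Rightarrow> ('a set \<Rightarrow> real) \<Rightarrow> real" where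
  "PS A q Q = (\<Sum>T\<in>Pow A. (\<Prod>a\<in>T. q a) * (\<Prod>a\<in>A - T. 1 - q a) * Q T)"

lemma PS_insert:
  assumes "finite A" "a \<notin> A"
  shows "PS (insert a A) q Q = q a * PS A q (\<lambda>T. Q (insert a T)) + (1 - q a) * PS A q Q"
proof -
  have inj: "inj_on (insert a) (Pow A)"
  proof (rule inj_onI)
    fix X Y assume "X \<in> Pow A" "Y \<in> Pow A" "insert a X = insert a Y"
    then show "X = Y" using assms(2) by (metis Diff_insert_absorb PowD subsetD)
  qed
  have disj: "Pow A \<inter> insert a ` Pow A = {}" using assms(2) by blast
  have fin: "finite (Pow A)" "finite (insert a ` Pow A)" using assms(1) by auto
  have "PS (insert a A) q Q = (\<Sum>T\<in>Pow A. (\<Prod>b\<in>T. q b) * (\<Prod>b\<in>insert a A - T. 1 - q b) * Q T)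
      + (\<Sum>T\<in>insert a ` Pow A. (\<Prod>b\<in>T. q b) * (\<Prod>b\<in>insert a A - T. 1 - q b) * Q T)"
    unfolding PS_def Pow_insert by (rule sum.union_disjoint[OF fin disj])
  also have "(\<Sum>T\<in>Pow A. (\<Prod>b\<in>T. q b) * (\<Prod>b\<in>insert a A - T. 1 - q b) * Q T)
      = (1 - q a) * PS A q Q"
    unfolding PS_def sum_distrib_left
  proof (rule sum.cong[OF refl])
    fix T assume "T \<in> Pow A"
    then have "insert a A - T = insert a (A - T)" "a \<notin> A - T" "finite (A - T)"
      using assms by auto
    then show "(\<Prod>b\<in>T. q b) * (\<Prod>b\<in>insert a A - T. 1 - q b) * Q T
        = (1 - q a) * ((\<Prod>b\<in>T. q b) * (\<Prod>b\<in>A - T. 1 - q b) * Q T)"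
      by simp
  qed
  also have "(\<Sum>T\<in>insert a ` Pow A. (\<Prod>b\<in>T. q b) * (\<Prod>b\<in>insert a A - T. 1 - q b) * Q T)
      = q a * PS A q (\<lambda>T. Q (insert a T))"
    unfolding PS_def sum_distrib_left sum.reindex[OF inj] o_def
  proof (rule sum.cong[OF refl])
    fix T assume "T \<in> Pow A"
    then have "insert a A - insert a T = A - T" "a \<notin> T" "finite T"
      using assms by (auto intro: finite_subset)
    then show "(\<Prod>b\<in>insert a T. q b) * (\<Prod>b\<in>insert a A - insert a T. 1 - q b) * Q (insert a T)
        = q a * ((\<Prod>b\<in>T. q b) * (\<Prod>b\<in>A - T. 1 - q b) * Q (insert a T))"
      by simp
  qed
  finally show ?thesis by simp
qed

lemma PS_empty: "PS {} q Q = Q {}"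
  unfolding PS_def by simp

lemma PS_cong: "(\<And>T. T \<subseteq> A \<Longrightarrow> Q T = Q' T) \<Longrightarrow> PS A q Q = PS A q Q'"
  unfolding PS_def by (rule sum.cong) auto

lemma PS_const: "finite A \<Longrightarrow> PS A q (\<lambda>_. c) = c"
proof (induction A rule: finite_induct)
  case empty then show ?case by (simp add: PS_empty)
next
  case (insert a A)
  have "PS (insert a A) q (\<lambda>_. c) = q a * c + (1 - q a) * c"
    using PS_insert[OF insert(1,2), of q "\<lambda>_. c"] insert(3) by simp
  then show ?case by (simp add: algebra_simps)
qed

lemma PS_scale: "PS A q (\<lambda>T. c * Q T) = c * PS A q Q"
  unfolding PS_def sum_distrib_left by (rule sum.cong) auto

lemma mem_line: "(a, b) \<in> line_edges n \<longleftrightarrow> a = Suc b \<and> 1 \<le> b \<and> b < n"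
  unfolding line_edges_def by auto

lemma line_eq: "line_edges n = (\<lambda>i. (Suc i, i)) ` {1..<n}"
  unfolding line_edges_def by auto

lemma fin_line: "finite (line_edges n)"
  unfolding line_eq by simp

lemma R1: assumes "phi \<subseteq> line_edges n" "(s, v) \<in> phi\<^sup>*" shows "v \<le> s"
  using assms(2)
proof (induction rule: rtrancl_induct)
  case base then show ?case by simp
next
  case (step y z)
  have "(y, z) \<in> line_edges n" using step(2) assms(1) by blast
  then have "y = Suc z" by (simp add: mem_line)
  then show ?case using step(3) by simp
qed

lemma R3:
  assumes "phi \<subseteq> line_edges n" "(s, v) \<in> (insert (Suc u, u) phi)\<^sup>*"
  shows "Suc u \<le> v \<longrightarrow> (s, v) \<in> phi\<^sup>*"
  using assms(2)
proof (induction rule: rtrancl_induct)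
  case base then show ?case by simp
next
  case (step y z)
  show ?case
  proof
    assume z: "Suc u \<le> z"
    then have "(y, z) \<in> phi" using step(2) by auto
    then have "y = Suc z" using assms(1) mem_line by blast
    then have "(s, y) \<in> phi\<^sup>*" using step(3) z by simp
    then show "(s, z) \<in> phi\<^sup>*" using \<open>(y, z) \<in> phi\<close> by simp
  qed
qed

lemma G_self: "u \<in> S \<Longrightarrow> u \<in> Gamma S phi"
  unfolding Gamma_def by blast

lemma G_noin:
  assumes "phi \<subseteq> line_edges n - {(Suc u, u)}" "u \<notin> S"
  shows "u \<notin> Gamma S phi"
proof
  assume "u \<in> Gamma S phi"
  then obtain s where s: "s \<in> S" "(s, u) \<in> phi\<^sup>*" unfolding Gamma_def by blast
  then have "s \<noteq> u" using assms by blast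
  then obtain w where "(w, u) \<in> phi" using s(2) by (metis rtranclE)
  then show False using assms(1) mem_line by blast
qed

lemma G_top:
  assumes "phi \<subseteq> line_edges n"
  shows "(Suc u \<in> Gamma S (insert (Suc u, u) phi)) = (Suc u \<in> Gamma S phi)"
proof
  assume "Suc u \<in> Gamma S (insert (Suc u, u) phi)"
  then show "Suc u \<in> Gamma S phi" unfolding Gamma_def using R3[OF assms] by blast
next
  assume "Suc u \<in> Gamma S phi"
  then show "Suc u \<in> Gamma S (insert (Suc u, u) phi)" unfolding Gamma_def
    using rtrancl_mono[of phi "insert (Suc u, u) phi"] by blast
qed

lemma G_step:
  assumes "phi \<subseteq> line_edges n - {(Suc u, u)}" "u \<notin> S"
  shows "(u \<in> Gamma S (insert (Suc u, u) phi)) = (Suc u \<in> Gamma S phi)"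
proof
  assume "u \<in> Gamma S (insert (Suc u, u) phi)"
  then obtain s where s: "s \<in> S" "(s, u) \<in> (insert (Suc u, u) phi)\<^sup>*" unfolding Gamma_def by blast
  then have "s \<noteq> u" using assms by blast
  then obtain w where w: "(s, w) \<in> (insert (Suc u, u) phi)\<^sup>*" "(w, u) \<in> insert (Suc u, u) phi"
    using s(2) by (metis rtranclE)
  have "w = Suc u" using w(2) assms(1) mem_line by blast
  then have "(s, Suc u) \<in> phi\<^sup>*" using R3[of phi n s "Suc u" u] assms(1) w(1) by blast
  then show "Suc u \<in> Gamma S phi" unfolding Gamma_def using s(1) by blast
next
  assume "Suc u \<in> Gamma S phi"
  then obtain s where s: "s \<in> S" "(s, Suc u) \<in> phi\<^sup>*" unfolding Gamma_def by blast
  then have "(s, Suc u) \<in> (insert (Suc u, u) phi)\<^sup>*"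
    using rtrancl_mono[of phi "insert (Suc u, u) phi"] by blast
  then have "(s, u) \<in> (insert (Suc u, u) phi)\<^sup>*" by (simp add: rtrancl_into_rtrancl)
  then show "u \<in> Gamma S (insert (Suc u, u) phi)" unfolding Gamma_def using s(1) by blast
qed

lemma G_ins:
  assumes "phi \<subseteq> line_edges n" "u < v"
  shows "(v \<in> Gamma (insert u T) phi) = (v \<in> Gamma T phi)"
  using R1[OF assms(1), of u v] assms(2) unfolding Gamma_def by auto

lemma G_n:
  assumes "phi \<subseteq> line_edges n"
  shows "(n \<in> Gamma S phi) = (n \<in> S)"
proof
  assume "n \<in> Gamma S phi"
  then obtain s where s: "s \<in> S" "(s, n) \<in> phi\<^sup>*" unfolding Gamma_def by blast
  show "n \<in> S"
  proof (rule ccontr)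
    assume "n \<notin> S"
    then have "s \<noteq> n" using s by blast
    then obtain w where "(w, n) \<in> phi" using s(2) by (metis rtranclE)
    then show False using assms(1) mem_line by blast
  qed
qed (rule G_self)

lemma sigma_eq: "sigma E pe u S = PS E pe (\<lambda>phi. if u \<in> Gamma S phi then 1 else 0)"
  unfolding sigma_def PS_def realization_prob_def by simp

lemma F_eq: "F E pe n u y = PS {1..n} y (sigma E pe u)"
  unfolding F_def PS_def by simp

lemma S1:
  assumes "1 \<le> u" "u < n"
  shows "sigma (line_edges n) pe u S
     = (if u \<in> S then 1 else pe (Suc u, u) * sigma (line_edges n) pe (Suc u) S)"
proof -
  define e where "e = (Suc u, u)"
  define E' where "E' = line_edges n - {e}"
  have E: "line_edges n = insert e E'" "finite E'" "e \<notin> E'"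
    using assms fin_line unfolding E'_def e_def by (auto simp: mem_line)
  show ?thesis
  proof (cases "u \<in> S")
    case True
    then show ?thesis unfolding sigma_eq by (simp add: G_self PS_const[OF fin_line])
  next
    case False
    have a: "PS E' pe (\<lambda>phi. if u \<in> Gamma S (insert e phi) then 1 else 0)
        = PS E' pe (\<lambda>phi. if Suc u \<in> Gamma S phi then 1 else 0)"
      by (rule PS_cong) (simp add: G_step[OF _ False] E'_def e_def)
    have b: "PS E' pe (\<lambda>phi. if u \<in> Gamma S phi then 1 else 0) = PS E' pe (\<lambda>_. 0)"
      by (rule PS_cong) (simp add: G_noin[OF _ False] E'_def e_def)
    have c: "PS E' pe (\<lambda>phi. if Suc u \<in> Gamma S (insert e phi) then 1 else 0)
        = PS E' pe (\<lambda>phi. if Suc u \<in> Gamma S phi then 1 else 0)"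
    proof (rule PS_cong)
      fix T assume "T \<subseteq> E'"
      then have "T \<subseteq> line_edges n" by (auto simp: E'_def)
      then show "(if Suc u \<in> Gamma S (insert e T) then 1 else 0) = (if Suc u \<in> Gamma S T then (1::real) else 0)"
        by (simp add: G_top e_def)
    qed
    show ?thesis using False
      unfolding sigma_eq E(1) PS_insert[OF E(2,3)] a b c PS_const[OF E(2)]
      by (simp add: e_def algebra_simps)
  qed
qed

lemma S2: "u < v \<Longrightarrow> sigma (line_edges n) pe v (insert u T) = sigma (line_edges n) pe v T"
  unfolding sigma_eq by (rule PS_cong) (simp add: G_ins)

lemma Sn: "sigma (line_edges n) pe n S = (if n \<in> S then 1 else 0)"
proof -
  have "sigma (line_edges n) pe n S = PS (line_edges n) pe (\<lambda>_. if n \<in> S then 1 else 0)"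
    unfolding sigma_eq by (rule PS_cong) (simp add: G_n)
  then show ?thesis by (simp add: PS_const[OF fin_line])
qed

lemma Sself: "u \<in> S \<Longrightarrow> sigma (line_edges n) pe u S = 1"
  unfolding sigma_eq by (simp add: G_self PS_const[OF fin_line])

lemma F1:
  assumes "1 \<le> u" "u < n"
  shows "F (line_edges n) pe n u y
     = y u + (1 - y u) * pe (Suc u, u) * F (line_edges n) pe n (Suc u) y"
proof -
  define A where "A = {1..n} - {u}"
  have I: "{1..n} = insert u A" "finite A" "u \<notin> A" using assms unfolding A_def by auto
  have a: "PS A y (\<lambda>T. sigma (line_edges n) pe u (insert u T)) = PS A y (\<lambda>_. 1)"
    by (rule PS_cong) (simp add: Sself)
  have b: "PS A y (sigma (line_edges n) pe u)
      = PS A y (\<lambda>T. pe (Suc u, u) * sigma (line_edges n) pe (Suc u) T)"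
    by (rule PS_cong) (use I(3) S1[OF assms] in auto)
  have c: "PS A y (\<lambda>T. sigma (line_edges n) pe (Suc u) (insert u T))
      = PS A y (sigma (line_edges n) pe (Suc u))"
    by (rule PS_cong) (simp add: S2)
  show ?thesis
    unfolding F_eq I(1) PS_insert[OF I(2,3)] a b c PS_scale PS_const[OF I(2)]
    by (simp add: algebra_simps)
qed

lemma F2:
  assumes "1 \<le> n"
  shows "F (line_edges n) pe n n y = y n"
proof -
  define A where "A = {1..n} - {n}"
  have I: "{1..n} = insert n A" "finite A" "n \<notin> A" using assms unfolding A_def by auto
  have a: "PS A y (\<lambda>T. sigma (line_edges n) pe n (insert n T)) = PS A y (\<lambda>_. 1)"
    by (rule PS_cong) (simp add: Sself)
  have b: "PS A y (sigma (line_edges n) pe n) = PS A y (\<lambda>_. 0)"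
    by (rule PS_cong) (use I(3) Sn in auto)
  show ?thesis
    unfolding F_eq I(1) PS_insert[OF I(2,3)] a b PS_const[OF I(2)] by simp
qed

lemma F3:
  assumes "1 \<le> u" "u \<le> n" "\<And>j. u \<le> j \<Longrightarrow> j \<le> n \<Longrightarrow> y j = y' j"
  shows "F (line_edges n) pe n u y = F (line_edges n) pe n u y'"
  using assms(2)
proof (induction rule: inc_induct)
  case base
  then show ?case using assms by (simp add: F2)
next
  case (step v)
  have "1 \<le> v" "v \<le> n" using assms step by auto
  then show ?case using F1[OF _ step(2), of pe y] F1[OF _ step(2), of pe y'] step(3) assms(3)[of v] step(1)
    by simp
qed

lemma Fz:
  assumes "1 \<le> u" "u \<le> i" "i \<le> n" "\<And>j. j < i \<Longrightarrow> z j = 0"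
  shows "F (line_edges n) pe n u z = (\<Prod>k\<in>{u..<i}. pe (Suc k, k)) * F (line_edges n) pe n i z"
  using assms(2)
proof (induction rule: inc_induct)
  case base
  then show ?case by simp
next
  case (step v)
  have "1 \<le> v" "v < n" using assms step by auto
  then have "F (line_edges n) pe n v z = pe (Suc v, v) * F (line_edges n) pe n (Suc v) z"
    using F1[of v n pe z] assms(4)[of v] step(2) by simp
  moreover have "(\<Prod>k\<in>{v..<i}. pe (Suc k, k)) = pe (Suc v, v) * (\<Prod>k\<in>{Suc v..<i}. pe (Suc k, k))"
    by (rule prod.atLeast_Suc_lessThan) (use step(2) in simp)
  ultimately show ?case using step(3) by simp
qed

lemma Sz:
  assumes "1 \<le> u" "u \<le> i" "i \<le> n"
  shows "sigma (line_edges n) pe u {i} = (\<Prod>k\<in>{u..<i}. pe (Suc k, k))"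
  using assms(2)
proof (induction rule: inc_induct)
  case base
  then show ?case by (simp add: Sself)
next
  case (step v)
  have "1 \<le> v" "v < n" using assms step by auto
  then have "sigma (line_edges n) pe v {i} = pe (Suc v, v) * sigma (line_edges n) pe (Suc v) {i}"
    using S1[of v n pe "{i}"] step(2) by simp
  moreover have "(\<Prod>k\<in>{v..<i}. pe (Suc k, k)) = pe (Suc v, v) * (\<Prod>k\<in>{Suc v..<i}. pe (Suc k, k))"
    by (rule prod.atLeast_Suc_lessThan) (use step(2) in simp)
  ultimately show ?case using step(3) by simp
qed

theorem lemma7:
  fixes n i :: nat and pe :: "nat \<times> nat \<Rightarrow> real" and x :: "nat \<Rightarrow> real"
  assumes "\<forall>e\<in>line_edges n. 0 \<le> pe e \<and> pe e \<le> 1"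
    and "\<forall>j\<in>{1..n}. 0 \<le> x j \<and> x j \<le> 1"
    and "i \<in> {1..n}"
  shows "F (line_edges n) pe n 1 (\<lambda>j. if j < i then 0 else x j)
           - F (line_edges n) pe n 1 (\<lambda>j. if j \<le> i then 0 else x j)
         = x i * sigma (line_edges n) pe 1 {i}
             * (1 - F (line_edges n) pe n i (\<lambda>j. if j \<le> i then 0 else x j))"
proof -
  define y where "y = (\<lambda>j. if j < i then 0 else x j)"
  define y' where "y' = (\<lambda>j. if j \<le> i then 0 else x j)"
  define p where "p = (\<Prod>k\<in>{1..<i}. pe (Suc k, k))"
  have i: "1 \<le> i" "i \<le> n" using assms(3) by auto
  have e1: "F (line_edges n) pe n 1 y = p * F (line_edges n) pe n i y"
    unfolding p_def by (rule Fz) (use i in \<open>auto simp: y_def\<close>)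
  have e2: "F (line_edges n) pe n 1 y' = p * F (line_edges n) pe n i y'"
    unfolding p_def by (rule Fz) (use i in \<open>auto simp: y'_def\<close>)
  have e3: "sigma (line_edges n) pe 1 {i} = p"
    unfolding p_def by (rule Sz) (use i in auto)
  have key: "F (line_edges n) pe n i y - F (line_edges n) pe n i y'
      = x i * (1 - F (line_edges n) pe n i y')"
  proof (cases "i < n")
    case True
    have f: "F (line_edges n) pe n (Suc i) y = F (line_edges n) pe n (Suc i) y'"
      by (rule F3) (use True in \<open>auto simp: y_def y'_def\<close>)
    have g1: "F (line_edges n) pe n i y = x i + (1 - x i) * pe (Suc i, i) * F (line_edges n) pe n (Suc i) y"
      using F1[OF i(1) True, of pe y] by (simp add: y_def)
    have g2: "F (line_edges n) pe n i y' = pe (Suc i, i) * F (line_edges n) pe n (Suc i) y'"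
      using F1[OF i(1) True, of pe y'] by (simp add: y'_def)
    show ?thesis unfolding g1 g2 f by (simp add: algebra_simps)
  next
    case False
    then have "i = n" using i by simp
    then show ?thesis using i F2[of n pe y] F2[of n pe y'] by (simp add: y_def y'_def)
  qed
  show ?thesis
    unfolding y_def[symmetric] y'_def[symmetric] e1 e2 e3
    using arg_cong[OF key, of "(*) p"] by (simp add: algebra_simps)
qed

end
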